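(* Let $\mathbf{A}=[\mathbf{A}_1;\dots;\mathbf{A}_N]\in\mathbb{R}^{NU\times M}$ and $\mathbf{B}=[\mathbf{B}_1,\dots,\mathbf{B}_P]\in\mathbb{R}^{M\times PQ}$ be random matrices, partitioned into row blocks $\mathbf{A}_n\in\mathbb{R}^{U\times M}$ and column blocks $\mathbf{B}_p\in\mathbb{R}^{M\times Q}$, all of whose entries are independent and zero-mean, with the entries of $\mathbf{A}_n$ having variance $\sigma_{A_n}^2$ and those of $\mathbf{B}_p$ having variance $\sigma_{B_p}^2$. Let $\mathbf{C}=\mathbf{A}\mathbf{B}$ with sub-blocks $\mathbf{C}_{np}=\mathbf{A}_n\mathbf{B}_p\in\mathbb{R}^{U\times Q}$. Suppose the $NP$ sub-products are partitioned into $L$ importance classes, class $l\in\{1,\dots,L\}$ containing $n_l$ sub-products, and such that for every sub-product $\mathbf{C}_{np}$ in class $l$ one has $\sigma_{A_n}^2=\sigma_{l,1}^2$ and $\sigma_{B_p}^2=\sigma_{l,2}^2$. The product is computed with the NOW-UEP scheme by $W$ workers whose computation times $T_1,\dots,T_W$ are i.i.d. with CDF $F$; at deadline $T_{\max}$ the parameter server has received the $N(T_{\max})=|\{w: T_w<T_{\max}\}|$ coded products, so that $$P_{N(T_{\max})}(w)=\Pr[N(T_{\max})=w]=\binom{W}{w}\,(1-F(T_{\max}))^{W-w}\,F(T_{\max})^{w}.$$ For each class $l$, let $P_{d,l}(w)$ be the probability that all sub-products of class $l$ are decoded from $w$ received coded products; the estimate $\hat{\mathbf{C}}$ sets $\hat{\mathbf{C}}_{np}=\mathbf{C}_{np}$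 for decoded sub-products and $\hat{\mathbf{C}}_{np}=\mathbf{0}$ otherwise. Assume the worker times and the coding randomness are independent of the entries of $\mathbf{A},\mathbf{B}$. Then the expected loss $\mathcal{L}(T_{\max})=\|\mathbf{C}-\hat{\mathbf{C}}\|_F^2$ satisfies $$\mathbb{E}[\mathcal{L}(T_{\max})]=\sum_{w=0}^{W}P_{N(T_{\max})}(w)\,\mathbb{E}\big[\|\mathbf{C}-\hat{\mathbf{C}}\|_F^2\,\big|\,N(T_{\max})=w\big],$$ where $$\mathbb{E}\big[\|\mathbf{C}-\hat{\mathbf{C}}\|_F^2\,\big|\,N(T_{\max})=w\big]=\sum_{l=1}^{L} n_l\,\big(1-P_{d,l}(w)\big)\,MUQ\,\sigma_{l,1}^2\sigma_{l,2}^2 .$$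
   Context: NOW-UEP (non-overlapping windows unequal error protection) scheme: the sub-products are grouped into $L$ disjoint "windows" (classes) by importance; each worker $w$ draws a class $i$ at random according to window selection probabilities $\Gamma_1,\dots,\Gamma_L$ ($\sum_i\Gamma_i=1$), and receives random linear combinations $\mathbf{W}_A^w=\sum_i\alpha_i^w\mathbf{A}_{\pi_A^w(i)}$ and $\mathbf{W}_B^w=\sum_j\beta_j^w\mathbf{B}_{\pi_B^w(j)}$ of the row/column blocks belonging to the selected class (random coefficients $\alpha,\beta$), and returns $\mathbf{W}_A^w\mathbf{W}_B^w$. The parameter server decodes whichever class sub-products it can recover from the received products. $\|\cdot\|_F$ denotes the Frobenius norm. (The paper notes that $P_{d,l}(w)$ is upper bounded by $\sum_{\mathbf{n}:\sum_i n_i=w}\frac{w!}{n_1!\cdots n_L!}\Gamma_1^{n_1}\cdots\Gamma_L^{n_L}\mathbf{1}(n_l\ge k_l)$ with $k_l$ the number of packets in class $l$, which is tight as the field size grows.) *)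

theory Defs
  imports "HOL-Probability.Probability"
begin

definition cond_prob :: "'a measure \<Rightarrow> 'a set \<Rightarrow> 'a set \<Rightarrow> real" where
  "cond_prob M A B = measure M (A \<inter> B) / measure M B"

definition cond_exp_event :: "'a measure \<Rightarrow> ('a \<Rightarrow> real) \<Rightarrow> 'a set \<Rightarrow> real" where
  "cond_exp_event M X B = (\<integral>x. indicator B x * X x \<partial>M) / measure M B"

text \<open>Block C_np = A_n B_p, entry (u,q): sum over m < M of A_n(u,m) B_p(m,q).
  A n u m is entry (u,m) of block A_n; B p m q is entry (m,q) of block B_p.\<close>
definition blockprod :: "nat \<Rightarrow> (nat \<Rightarrow> nat \<Rightarrow> nat \<Rightarrow> real) \<Rightarrow> (nat \<Rightarrow> nat \<Rightarrow> nat \<Rightarrow> real)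
    \<Rightarrow> nat \<Rightarrow> nat \<Rightarrow> nat \<Rightarrow> nat \<Rightarrow> real" where
  "blockprod M A B n p u q = (\<Sum>m<M. A n u m * B p m q)"

definition loss :: "nat \<Rightarrow> nat \<Rightarrow> nat \<Rightarrow> nat \<Rightarrow> nat \<Rightarrow> (nat \<Rightarrow> nat \<Rightarrow> nat \<Rightarrow> real)
    \<Rightarrow> (nat \<Rightarrow> nat \<Rightarrow> nat \<Rightarrow> real) \<Rightarrow> (nat \<Rightarrow> nat \<Rightarrow> nat) \<Rightarrow> (nat \<Rightarrow> bool) \<Rightarrow> real" where
  "loss N P U M Q A B cls decoded =
     (\<Sum>n<N. \<Sum>p<P. \<Sum>u<U. \<Sum>q<Q.
        (blockprod M A B n p u q - (if decoded (cls n p) then blockprod M A B n p u q else 0))\<^sup>2)"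

definition rcv :: "nat \<Rightarrow> (nat \<Rightarrow> 'a \<Rightarrow> real) \<Rightarrow> real \<Rightarrow> 'a \<Rightarrow> nat set" where
  "rcv W T Tmax \<omega> = {w \<in> {..<W}. T w \<omega> < Tmax}"

end

theory Submission
  imports Defs
begin


lemma (in prob_space) second_moment:
  fixes X :: "'i \<Rightarrow> 'a \<Rightarrow> real" and a b :: "nat \<Rightarrow> 'i" and K :: nat
  assumes ind: "indep_vars (\<lambda>_. borel) X I"
    and inja: "inj a" and injb: "inj b" and ab: "\<And>m m'. a m \<noteq> b m'"
    and aI: "\<And>m. m < K \<Longrightarrow> a m \<in> I" and bI: "\<And>m. m < K \<Longrightarrow> b m \<in> I"
    and mean: "\<And>i. i \<in> I \<Longrightarrow> expectation (X i) = 0"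
    and sq: "\<And>i. i \<in> I \<Longrightarrow> integrable M (\<lambda>x. (X i x)\<^sup>2)"
  shows "integrable M (\<lambda>x. (\<Sum>m<K. X (a m) x * X (b m) x)\<^sup>2) \<and>
         expectation (\<lambda>x. (\<Sum>m<K. X (a m) x * X (b m) x)\<^sup>2)
           = (\<Sum>m<K. expectation (\<lambda>x. (X (a m) x)\<^sup>2) * expectation (\<lambda>x. (X (b m) x)\<^sup>2))"
proof -
  have rv: "\<And>i. i \<in> I \<Longrightarrow> X i \<in> borel_measurable M"
    using ind unfolding indep_vars_def by auto
  have int: "\<And>i. i \<in> I \<Longrightarrow> integrable M (X i)"
    using rv sq by (blast intro: square_integrable_imp_integrable)
  have ind2: "indep_vars (\<lambda>_. borel) (\<lambda>i x. (X i x)\<^sup>2) I"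
    by (rule indep_vars_compose2[OF ind]) auto
  define t where "t m m' x = X (a m) x * X (b m) x * (X (a m') x * X (b m') x)" for m m' x
  have sqexp: "(\<lambda>x. (\<Sum>m<K. X (a m) x * X (b m) x)\<^sup>2) = (\<lambda>x. \<Sum>m<K. \<Sum>m'<K. t m m' x)"
    by (auto simp: t_def power2_eq_square sum_product)
  have diag: "integrable M (t m m) \<and> expectation (t m m) =
      expectation (\<lambda>x. (X (a m) x)\<^sup>2) * expectation (\<lambda>x. (X (b m) x)\<^sup>2)" if "m < K" for m
  proof -
    have i2: "indep_vars (\<lambda>_. borel) (\<lambda>i x. (X i x)\<^sup>2) {a m, b m}"
      by (rule indep_vars_subset[OF ind2]) (use aI bI that in auto)
    have e: "t m m = (\<lambda>x. \<Prod>i\<in>{a m, b m}. (X i x)\<^sup>2)"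
      using ab[of m m] by (auto simp: t_def power2_eq_square fun_eq_iff)
    show ?thesis unfolding e
      using indep_vars_lebesgue_integral[OF _ i2] indep_vars_integrable[OF _ i2]
        sq aI bI that ab[of m m] by auto
  qed
  have offdiag: "integrable M (t m m') \<and> expectation (t m m') = 0"
    if "m < K" "m' < K" "m \<noteq> m'" for m m'
  proof -
    let ?J = "{a m, b m, a m', b m'}"
    have i2: "indep_vars (\<lambda>_. borel) X ?J"
      by (rule indep_vars_subset[OF ind]) (use aI bI that in auto)
    have d: "a m \<noteq> a m'" "b m \<noteq> b m'" using inja injb that by (auto dest: injD)
    have e: "t m m' = (\<lambda>x. \<Prod>i\<in>?J. X i x)"
      using ab[of m m] ab[of m m'] ab[of m' m] ab[of m' m'] d by (auto simp: t_def fun_eq_iff)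
    have "(\<Prod>i\<in>?J. expectation (X i)) = 0"
      by (rule prod_zero) (use mean aI that in auto)
    moreover have ii: "\<And>i. i \<in> ?J \<Longrightarrow> integrable M (X i)" using int aI bI that by auto
    ultimately show ?thesis unfolding e
      using indep_vars_lebesgue_integral[OF _ i2 ii] indep_vars_integrable[OF _ i2 ii]
      by simp
  qed
  have allint: "integrable M (t m m')" if "m < K" "m' < K" for m m'
    using diag offdiag that by (cases "m = m'") auto
  show ?thesis unfolding sqexp
  proof
    show "integrable M (\<lambda>x. \<Sum>m<K. \<Sum>m'<K. t m m' x)"
      using allint by (intro Bochner_Integration.integrable_sum) auto
    have "expectation (\<lambda>x. \<Sum>m<K. \<Sum>m'<K. t m m' x) = (\<Sum>m<K. \<Sum>m'<K. expectation (t m m'))"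
      using allint
      by (subst Bochner_Integration.integral_sum, intro Bochner_Integration.integrable_sum, simp,
          intro sum.cong refl Bochner_Integration.integral_sum, simp)
    also have "\<dots> = (\<Sum>m<K. expectation (t m m))"
    proof (rule sum.cong[OF refl])
      fix m assume m: "m \<in> {..<K}"
      have "(\<Sum>m'<K. expectation (t m m')) = (\<Sum>m'\<in>{m}. expectation (t m m'))"
        by (rule sum.mono_neutral_right) (use m offdiag in auto)
      then show "(\<Sum>m'<K. expectation (t m m')) = expectation (t m m)" by simp
    qed
    also have "\<dots> = (\<Sum>m<K. expectation (\<lambda>x. (X (a m) x)\<^sup>2) * expectation (\<lambda>x. (X (b m) x)\<^sup>2))"
      using diag by auto
    finally show "expectation (\<lambda>x. \<Sum>m<K. \<Sum>m'<K. t m m' x) = \<dots>" .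
  qed
qed



lemma (in prob_space) binom_count:
  fixes T :: "nat \<Rightarrow> 'a \<Rightarrow> real"
  assumes ind: "indep_vars (\<lambda>_. borel) T {..<W}"
    and p: "\<And>j. j < W \<Longrightarrow> prob {\<omega>\<in>space M. T j \<omega> < c} = p"
  shows "prob {\<omega>\<in>space M. card {j\<in>{..<W}. T j \<omega> < c} = k}
           = real (W choose k) * (1-p)^(W-k) * p^k"
proof -
  have rv: "\<And>j. j < W \<Longrightarrow> T j \<in> borel_measurable M"
    using ind unfolding indep_vars_def by auto
  define R where "R \<omega> = {j\<in>{..<W}. T j \<omega> < c}" for \<omega>
  define Sk where "Sk = {S. S \<subseteq> {..<W} \<and> card S = k}"
  define E where "E S = {\<omega>\<in>space M. R \<omega> = S}" for S
  have Eev: "E S \<in> events" for S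
  proof -
    have "E S = {\<omega>\<in>space M. \<forall>j\<in>{..<W}. (T j \<omega> < c) = (j \<in> S)} \<inter> {\<omega>\<in>space M. S \<subseteq> {..<W}}"
      by (auto simp: E_def R_def)
    also have "\<dots> \<in> events"
    proof (intro sets.Int sets.sets_Collect_finite_All)
      fix j assume j: "j \<in> {..<W}"
      have [measurable]: "T j \<in> borel_measurable M" using rv j by simp
      show "{\<omega> \<in> space M. (T j \<omega> < c) = (j \<in> S)} \<in> events"
        by measurable
    qed auto
    finally show ?thesis .
  qed
  have probE: "prob (E S) = p ^ card S * (1-p) ^ (W - card S)" if S: "S \<subseteq> {..<W}" for S
  proof (cases "W = 0")
    case True
    then have "E S = space M" using S by (auto simp: E_def R_def)
    then show ?thesis using True S by (simp add: prob_space)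
  next
    case False
    define A where "A j = (if j \<in> S then {..<c} else {c..})" for j
    have "E S = (\<Inter>j\<in>{..<W}. T j -` A j \<inter> space M)"
      using S False by (auto simp: E_def R_def A_def not_less split: if_splits; fastforce)
    then have "prob (E S) = (\<Prod>j\<in>{..<W}. prob (T j -` A j \<inter> space M))"
      using indep_varsD_finite[OF ind, of A] False by (auto simp: A_def)
    also have "\<dots> = (\<Prod>j\<in>{..<W}. if j \<in> S then p else 1 - p)"
    proof (rule prod.cong[OF refl])
      fix j assume j: "j \<in> {..<W}"
      have [measurable]: "T j \<in> borel_measurable M" using rv j by simp
      have ev: "{\<omega>\<in>space M. T j \<omega> < c} \<in> events" by measurable
      show "prob (T j -` A j \<inter> space M) = (if j \<in> S then p else 1 - p)"
      proof (cases "j \<in> S")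
        case True
        have "T j -` A j \<inter> space M = {\<omega>\<in>space M. T j \<omega> < c}" using True by (auto simp: A_def)
        then show ?thesis using p j True by simp
      next
        case False
        have "T j -` A j \<inter> space M = space M - {\<omega>\<in>space M. T j \<omega> < c}"
          using False by (auto simp: A_def)
        then show ?thesis using p j False prob_compl[OF ev] by simp
      qed
    qed
    also have "\<dots> = p ^ card S * (1-p) ^ (W - card S)"
    proof -
      have "{..<W} \<inter> {x. x \<in> S} = S" "{..<W} \<inter> - {x. x \<in> S} = {..<W} - S" using S by auto
      moreover have "card ({..<W} - S) = W - card S"
        using S by (simp add: card_Diff_subset finite_subset)
      ultimately show ?thesis by (simp add: prod.If_cases)
    qed
    finally show ?thesis .
  qed
  have U: "{\<omega>\<in>space M. card (R \<omega>) = k} = (\<Union>S\<in>Sk. E S)"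
    by (auto simp: Sk_def E_def R_def)
  have "prob (\<Union>S\<in>Sk. E S) = (\<Sum>S\<in>Sk. prob (E S))"
    by (rule finite_measure_finite_Union)
       (use Eev in \<open>auto simp: Sk_def disjoint_family_on_def E_def intro: finite_subset[of _ "Pow {..<W}"]\<close>)
  also have "\<dots> = (\<Sum>S\<in>Sk. p ^ k * (1-p) ^ (W - k))"
    by (rule sum.cong) (auto simp: Sk_def probE)
  also have "\<dots> = real (W choose k) * (1-p)^(W-k) * p^k"
    using n_subsets[of "{..<W}" k] by (simp add: Sk_def)
  finally show ?thesis using U by (simp add: R_def)
qed


lemma group_cls:
  fixes f :: "nat \<Rightarrow> real" and N P :: nat
  assumes "\<And>n p. n < N \<Longrightarrow> p < P \<Longrightarrow> cls n p \<in> {1..L}"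
  shows "(\<Sum>n<N. \<Sum>p<P. f (cls n p)) = (\<Sum>l=1..L. real (card {(n,p). n<N \<and> p<P \<and> cls n p = l}) * f l)"
proof -
  have "(\<Sum>n<N. \<Sum>p<P. f (cls n p)) = (\<Sum>x\<in>{..<N}\<times>{..<P}. f (case_prod cls x))"
    by (simp add: sum.cartesian_product split_def)
  also have "\<dots> = (\<Sum>l\<in>{1..L}. \<Sum>x\<in>{x. x \<in> {..<N}\<times>{..<P} \<and> case_prod cls x = l}. f (case_prod cls x))"
  proof (rule sum.group[symmetric])
    show "finite ({..<N}\<times>{..<P})" by simp
  qed (use assms in auto)
  also have "\<dots> = (\<Sum>l=1..L. real (card {(n,p). n<N \<and> p<P \<and> cls n p = l}) * f l)"
  proof (rule sum.cong[OF refl])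
    fix l
    have "{x. x \<in> {..<N}\<times>{..<P} \<and> case_prod cls x = l} = {(n,p). n<N \<and> p<P \<and> cls n p = l}"
      by auto
    moreover have "(\<Sum>x\<in>{(n,p). n<N \<and> p<P \<and> cls n p = l}. f (case_prod cls x))
        = (\<Sum>x\<in>{(n,p). n<N \<and> p<P \<and> cls n p = l}. f l)"
      by (rule sum.cong) auto
    ultimately show "(\<Sum>x\<in>{x. x \<in> {..<N}\<times>{..<P} \<and> case_prod cls x = l}. f (case_prod cls x)) =
        real (card {(n,p). n<N \<and> p<P \<and> cls n p = l}) * f l" by simp
  qed
  finally show ?thesis .
qed


lemma (in prob_space) preimage_sub:
fixes X :: "'a \<Rightarrow> 'b" and Y :: "'b \<Rightarrow> real"
assumes m: "X \<in> measurable M S" and y: "Y \<in> borel_measurable S"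
shows "{(\<lambda>\<omega>. Y (X \<omega>)) -` A \<inter> space M |A. A \<in> sets borel} \<subseteq> {X -` E \<inter> space M | E. E \<in> sets S}"
proof
  fix Z assume "Z \<in> {(\<lambda>\<omega>. Y (X \<omega>)) -` A \<inter> space M |A. A \<in> sets borel}"
  then obtain A where A: "A \<in> sets borel" "Z = (\<lambda>\<omega>. Y (X \<omega>)) -` A \<inter> space M" by auto
  have "Z = X -` (Y -` A \<inter> space S) \<inter> space M"
    using A measurable_space[OF m] by auto
  moreover have "Y -` A \<inter> space S \<in> sets S" using measurable_sets[OF y A(1)] .
  ultimately show "Z \<in> {X -` E \<inter> space M | E. E \<in> sets S}" by blast
qed

lemma (in prob_space) indep_var_from_set:
  assumes ind: "indep_set {X1 -` E \<inter> space M | E. E \<in> sets S1} {X2 -` E \<inter> space M | E. E \<in> sets S2}"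
    and m1: "X1 \<in> measurable M S1" and m2: "X2 \<in> measurable M S2"
    and y1: "Y1 \<in> borel_measurable S1" and y2: "Y2 \<in> borel_measurable S2"
  shows "indep_var borel (\<lambda>\<omega>. Y1 (X1 \<omega>) :: real) borel (\<lambda>\<omega>. Y2 (X2 \<omega>))"
  unfolding indep_var_def indep_vars_def2
proof
  show "\<forall>i\<in>UNIV. random_variable (case_bool borel borel i) (case_bool (\<lambda>\<omega>. Y1 (X1 \<omega>)) (\<lambda>\<omega>. Y2 (X2 \<omega>)) i)"
    using measurable_compose[OF m1 y1] measurable_compose[OF m2 y2] by (auto split: bool.split)
  show "indep_sets (\<lambda>i. {case_bool (\<lambda>\<omega>. Y1 (X1 \<omega>)) (\<lambda>\<omega>. Y2 (X2 \<omega>)) i -` A \<inter> space M |A.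
          A \<in> sets (case_bool borel borel i)}) UNIV"
    by (rule indep_sets_mono_sets[OF ind[unfolded indep_set_def]])
       (use preimage_sub[OF m1 y1] preimage_sub[OF m2 y2] in \<open>auto split: bool.split\<close>)
qed


lemma integrable_sum4:
  fixes f :: "nat \<Rightarrow> nat \<Rightarrow> nat \<Rightarrow> nat \<Rightarrow> 'a \<Rightarrow> real"
  assumes "\<And>a b c d. a < N \<Longrightarrow> b < P \<Longrightarrow> c < U \<Longrightarrow> d < Q \<Longrightarrow> integrable M (f a b c d)"
  shows "integrable M (\<lambda>x. \<Sum>a<N. \<Sum>b<P. \<Sum>c<U. \<Sum>d<Q. f a b c d x)"
  using assms by (intro Bochner_Integration.integrable_sum) auto

lemma integral_sum4:
  fixes f :: "nat \<Rightarrow> nat \<Rightarrow> nat \<Rightarrow> nat \<Rightarrow> 'a \<Rightarrow> real"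
  assumes i: "\<And>a b c d. a < N \<Longrightarrow> b < P \<Longrightarrow> c < U \<Longrightarrow> d < Q \<Longrightarrow> integrable M (f a b c d)"
  shows "integral\<^sup>L M (\<lambda>x. \<Sum>a<N. \<Sum>b<P. \<Sum>c<U. \<Sum>d<Q. f a b c d x)
     = (\<Sum>a<N. \<Sum>b<P. \<Sum>c<U. \<Sum>d<Q. integral\<^sup>L M (f a b c d))"
proof -
  have i3: "integrable M (\<lambda>x. \<Sum>b<P. \<Sum>c<U. \<Sum>d<Q. f a b c d x)" if "a < N" for a
    using i that by (intro Bochner_Integration.integrable_sum) auto
  have i2: "integrable M (\<lambda>x. \<Sum>c<U. \<Sum>d<Q. f a b c d x)" if "a < N" "b < P" for a b
    using i that by (intro Bochner_Integration.integrable_sum) auto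
  have i1: "integrable M (\<lambda>x. \<Sum>d<Q. f a b c d x)" if "a < N" "b < P" "c < U" for a b c
    using i that by (intro Bochner_Integration.integrable_sum) auto
  have "integral\<^sup>L M (\<lambda>x. \<Sum>a<N. \<Sum>b<P. \<Sum>c<U. \<Sum>d<Q. f a b c d x)
      = (\<Sum>a<N. integral\<^sup>L M (\<lambda>x. \<Sum>b<P. \<Sum>c<U. \<Sum>d<Q. f a b c d x))"
    using i3 by (intro Bochner_Integration.integral_sum) auto
  also have "\<dots> = (\<Sum>a<N. \<Sum>b<P. integral\<^sup>L M (\<lambda>x. \<Sum>c<U. \<Sum>d<Q. f a b c d x))"
    using i2 by (intro sum.cong refl Bochner_Integration.integral_sum) auto
  also have "\<dots> = (\<Sum>a<N. \<Sum>b<P. \<Sum>c<U. integral\<^sup>L M (\<lambda>x. \<Sum>d<Q. f a b c d x))"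
    using i1 by (intro sum.cong refl Bochner_Integration.integral_sum) auto
  also have "\<dots> = (\<Sum>a<N. \<Sum>b<P. \<Sum>c<U. \<Sum>d<Q. integral\<^sup>L M (f a b c d))"
    using i by (intro sum.cong refl Bochner_Integration.integral_sum) auto
  finally show ?thesis .
qed

theorem theorem1:
  fixes \<Omega> :: "'a measure"
    and N P U M Q W L :: nat
    and A :: "nat \<Rightarrow> nat \<Rightarrow> nat \<Rightarrow> 'a \<Rightarrow> real"   (* A n u m \<omega> : entry (u,m) of block A_n *)
    and B :: "nat \<Rightarrow> nat \<Rightarrow> nat \<Rightarrow> 'a \<Rightarrow> real"   (* B p m q \<omega> : entry (m,q) of block B_p *)
    and vA vB :: "nat \<Rightarrow> real"                      (* variances sigma_{A_n}^2, sigma_{B_p}^2 *)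
    and cls :: "nat \<Rightarrow> nat \<Rightarrow> nat"                  (* importance class of sub-product C_np *)
    and v1 v2 :: "nat \<Rightarrow> real"                      (* sigma_{l,1}^2, sigma_{l,2}^2 *)
    and T :: "nat \<Rightarrow> 'a \<Rightarrow> real"                   (* worker computation times *)
    and F :: "real \<Rightarrow> real" and Tmax :: real
    and Mk :: "'k measure" and K :: "'a \<Rightarrow> 'k"     (* coding randomness of NOW-UEP *)
    and dec :: "'k \<Rightarrow> nat set \<Rightarrow> nat \<Rightarrow> bool"     (* class l decoded from received set *)
  defines "Ient \<equiv> ({..<N} \<times> {..<U} \<times> {..<M}) <+> ({..<P} \<times> {..<M} \<times> {..<Q})"
      and "entry \<equiv> (\<lambda>i \<omega>. case i of Inl (n, u, m) \<Rightarrow> A n u m \<omega> | Inr (p, m, q) \<Rightarrow> B p m q \<omega>)"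
      and "Nrec \<equiv> (\<lambda>\<omega>. card (rcv W T Tmax \<omega>))"
      and "Loss \<equiv> (\<lambda>\<omega>. loss N P U M Q (\<lambda>n u m. A n u m \<omega>) (\<lambda>p m q. B p m q \<omega>) cls
                          (dec (K \<omega>) (rcv W T Tmax \<omega>)))"
      and "nl \<equiv> (\<lambda>l. card {(n, p). n < N \<and> p < P \<and> cls n p = l})"
      and "Pd \<equiv> (\<lambda>l w. cond_prob \<Omega> {\<omega> \<in> space \<Omega>. dec (K \<omega>) (rcv W T Tmax \<omega>) l}
                                   {\<omega> \<in> space \<Omega>. card (rcv W T Tmax \<omega>) = w})"
      and "PN \<equiv> (\<lambda>w. real (W choose w) * (1 - F Tmax) ^ (W - w) * F Tmax ^ w)"
  assumes prob: "prob_space \<Omega>"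
    (* all entries of A and B independent, zero mean, with the block variances *)
    and indep_entries: "prob_space.indep_vars \<Omega> (\<lambda>_. borel) entry Ient"
    and meanA: "\<And>n u m. n < N \<Longrightarrow> u < U \<Longrightarrow> m < M \<Longrightarrow> integral\<^sup>L \<Omega> (A n u m) = 0"
    and meanB: "\<And>p m q. p < P \<Longrightarrow> m < M \<Longrightarrow> q < Q \<Longrightarrow> integral\<^sup>L \<Omega> (B p m q) = 0"
    and sqintA: "\<And>n u m. n < N \<Longrightarrow> u < U \<Longrightarrow> m < M \<Longrightarrow> integrable \<Omega> (\<lambda>\<omega>. (A n u m \<omega>)\<^sup>2)"
    and sqintB: "\<And>p m q. p < P \<Longrightarrow> m < M \<Longrightarrow> q < Q \<Longrightarrow> integrable \<Omega> (\<lambda>\<omega>. (B p m q \<omega>)\<^sup>2)"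
    and varA: "\<And>n u m. n < N \<Longrightarrow> u < U \<Longrightarrow> m < M \<Longrightarrow> prob_space.variance \<Omega> (A n u m) = vA n"
    and varB: "\<And>p m q. p < P \<Longrightarrow> m < M \<Longrightarrow> q < Q \<Longrightarrow> prob_space.variance \<Omega> (B p m q) = vB p"
    (* classes 1..L, with the class variances *)
    and cls_range: "\<And>n p. n < N \<Longrightarrow> p < P \<Longrightarrow> cls n p \<in> {1..L}"
    and cls_varA: "\<And>n p. n < N \<Longrightarrow> p < P \<Longrightarrow> vA n = v1 (cls n p)"
    and cls_varB: "\<And>n p. n < N \<Longrightarrow> p < P \<Longrightarrow> vB p = v2 (cls n p)"
    (* worker times i.i.d. with CDF F *)
    and indep_T: "prob_space.indep_vars \<Omega> (\<lambda>_. borel) T {..<W}"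
    and cdf: "\<And>w t. w < W \<Longrightarrow> measure \<Omega> {\<omega> \<in> space \<Omega>. T w \<omega> \<le> t} = F t"
    and no_atom: "\<And>w. w < W \<Longrightarrow> measure \<Omega> {\<omega> \<in> space \<Omega>. T w \<omega> = Tmax} = 0"
    (* decoding is a measurable function of the coding randomness and the received set *)
    and dec_meas: "\<And>S l. (\<lambda>k. dec k S l) \<in> measurable Mk (count_space UNIV)"
    (* worker times and coding randomness independent of the entries of A, B *)
    and K_meas: "K \<in> measurable \<Omega> Mk"
    and indep_data: "prob_space.indep_set \<Omega>
        {(\<lambda>\<omega>. \<lambda>i\<in>Ient. entry i \<omega>) -` E \<inter> space \<Omega> | E. E \<in> sets (PiM Ient (\<lambda>_. borel))}
        {(\<lambda>\<omega>. (K \<omega>, \<lambda>w\<in>{..<W}. T w \<omega>)) -` E \<inter> space \<Omega>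
           | E. E \<in> sets (Mk \<Otimes>\<^sub>M PiM {..<W} (\<lambda>_. borel))}"
  shows "(\<forall>w\<le>W. measure \<Omega> {\<omega> \<in> space \<Omega>. Nrec \<omega> = w} = PN w)
       \<and> integral\<^sup>L \<Omega> Loss
           = (\<Sum>w\<le>W. PN w * cond_exp_event \<Omega> Loss {\<omega> \<in> space \<Omega>. Nrec \<omega> = w})
       \<and> (\<forall>w\<le>W. PN w > 0 \<longrightarrow>
            cond_exp_event \<Omega> Loss {\<omega> \<in> space \<Omega>. Nrec \<omega> = w}
              = (\<Sum>l=1..L. real (nl l) * (1 - Pd l w) * real (M * U * Q) * v1 l * v2 l))"
proof -
  interpret prob_space \<Omega> by (rule prob)
  define rs where "rs t = {j\<in>{..<W}. t j < Tmax}" for t :: "nat \<Rightarrow> real"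
  have rs_rcv: "rs (\<lambda>j\<in>{..<W}. T j \<omega>) = rcv W T Tmax \<omega>" for \<omega>
    by (auto simp: rs_def rcv_def)
  have rvT: "\<And>j. j \<in> {..<W} \<Longrightarrow> T j \<in> borel_measurable \<Omega>"
    using indep_T unfolding indep_vars_def by auto
  have rvE: "\<And>i. i \<in> Ient \<Longrightarrow> entry i \<in> borel_measurable \<Omega>"
    using indep_entries unfolding indep_vars_def by auto
  have pT: "prob {\<omega>\<in>space \<Omega>. T j \<omega> < Tmax} = F Tmax" if j: "j < W" for j
  proof -
    have [measurable]: "T j \<in> borel_measurable \<Omega>" using rvT j by simp
    have e: "{\<omega>\<in>space \<Omega>. T j \<omega> \<le> Tmax} = {\<omega>\<in>space \<Omega>. T j \<omega> < Tmax} \<union> {\<omega>\<in>space \<Omega>. T j \<omega> = Tmax}"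
      by auto
    have "prob ({\<omega>\<in>space \<Omega>. T j \<omega> < Tmax} \<union> {\<omega>\<in>space \<Omega>. T j \<omega> = Tmax})
       = prob {\<omega>\<in>space \<Omega>. T j \<omega> < Tmax} + prob {\<omega>\<in>space \<Omega>. T j \<omega> = Tmax}"
      by (rule finite_measure_Union) auto
    then show ?thesis using cdf[OF j, of Tmax] no_atom[OF j] e by simp
  qed
  have part1: "\<forall>w\<le>W. measure \<Omega> {\<omega> \<in> space \<Omega>. Nrec \<omega> = w} = PN w"
    using binom_count[OF indep_T pT] unfolding Nrec_def rcv_def PN_def by auto
  define X1 where "X1 = (\<lambda>\<omega>. \<lambda>i\<in>Ient. entry i \<omega>)"
  define X2 where "X2 = (\<lambda>\<omega>. (K \<omega>, \<lambda>j\<in>{..<W}. T j \<omega>))"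
  define S1 where "S1 = PiM Ient (\<lambda>_. borel :: real measure)"
  define S2 where "S2 = Mk \<Otimes>\<^sub>M PiM {..<W} (\<lambda>_. borel :: real measure)"
  have X1m: "X1 \<in> measurable \<Omega> S1" unfolding X1_def S1_def
    by (rule measurable_restrict) (rule rvE)
  have X2m: "X2 \<in> measurable \<Omega> S2" unfolding X2_def S2_def
    by (intro measurable_Pair K_meas measurable_restrict) (use rvT in auto)
  have indep12: "indep_set {X1 -` E \<inter> space \<Omega> | E. E \<in> sets S1} {X2 -` E \<inter> space \<Omega> | E. E \<in> sets S2}"
    using indep_data unfolding X1_def X2_def S1_def S2_def .
  have rsm: "(\<lambda>x. rs (snd x)) \<in> measurable S2 (count_space (Pow {..<W}))"
  proof (subst measurable_count_space_eq2, simp, intro conjI ballI)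
    show "(\<lambda>x. rs (snd x)) \<in> space S2 \<rightarrow> Pow {..<W}" by (auto simp: rs_def)
    fix S assume S: "S \<in> Pow {..<W}"
    have "(\<lambda>x. rs (snd x)) -` {S} \<inter> space S2 = {x\<in>space S2. \<forall>j\<in>{..<W}. (snd x j < Tmax) = (j \<in> S)}"
      using S by (auto simp: rs_def)
    also have "\<dots> \<in> sets S2"
    proof (rule sets.sets_Collect_finite_All)
      fix j assume j: "j \<in> {..<W}"
      have [measurable]: "(\<lambda>x. snd x j) \<in> borel_measurable S2"
        unfolding S2_def by (rule measurable_compose[OF measurable_snd measurable_component_singleton]) (use j in auto)
      show "{x \<in> space S2. (snd x j < Tmax) = (j \<in> S)} \<in> sets S2" by measurable
    qed simp
    finally show "(\<lambda>x. rs (snd x)) -` {S} \<inter> space S2 \<in> sets S2" .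
  qed
  have decm: "(\<lambda>x. dec (fst x) (rs (snd x)) l) \<in> measurable S2 (count_space UNIV)" for l
  proof (rule measurable_compose_countable'[where f="\<lambda>S x. dec (fst x) S l", OF _ rsm])
    fix S
    show "(\<lambda>x. dec (fst x) S l) \<in> measurable S2 (count_space UNIV)"
      unfolding S2_def by (rule measurable_compose[OF measurable_fst dec_meas])
  qed (simp add: countable_finite)
  have cardm: "(\<lambda>x. card (rs (snd x))) \<in> measurable S2 (count_space UNIV)"
    by (rule measurable_compose[OF rsm]) simp
  define g where "g w l x = (if card (rs (snd x)) = w \<and> \<not> dec (fst x) (rs (snd x)) l then 1 else 0 :: real)"
    for w l x
  have gm: "g w l \<in> borel_measurable S2" for w l
  proof -
    note [measurable] = decm[of l] cardm
    show ?thesis unfolding g_def by measurable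
  qed
  define Bw where "Bw w = {\<omega>\<in>space \<Omega>. Nrec \<omega> = w}" for w
  define D where "D l = {\<omega>\<in>space \<Omega>. dec (K \<omega>) (rcv W T Tmax \<omega>) l}" for l
  have Nrecm: "Nrec \<in> measurable \<Omega> (count_space UNIV)"
  proof -
    have "(\<lambda>\<omega>. card (rs (snd (X2 \<omega>)))) \<in> measurable \<Omega> (count_space UNIV)"
      by (rule measurable_compose[OF X2m cardm])
    then show ?thesis by (simp add: X2_def rs_rcv Nrec_def)
  qed
  have Dm: "(\<lambda>\<omega>. dec (K \<omega>) (rcv W T Tmax \<omega>) l) \<in> measurable \<Omega> (count_space UNIV)" for l
  proof -
    have "(\<lambda>\<omega>. dec (fst (X2 \<omega>)) (rs (snd (X2 \<omega>))) l) \<in> measurable \<Omega> (count_space UNIV)"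
      by (rule measurable_compose[OF X2m decm])
    then show ?thesis by (simp add: X2_def rs_rcv)
  qed
  have Bw_ev: "Bw w \<in> events" for w
  proof -
    note [measurable] = Nrecm
    show ?thesis unfolding Bw_def by measurable
  qed
  have D_ev: "D l \<in> events" for l
  proof -
    note [measurable] = Dm[of l]
    show ?thesis unfolding D_def by measurable
  qed
  have gX2: "g w l (X2 \<omega>) = indicator (Bw w - D l) \<omega>" if "\<omega> \<in> space \<Omega>" for w l \<omega>
    using that by (simp add: g_def X2_def rs_rcv Bw_def D_def Nrec_def indicator_def)
  have Eg: "expectation (\<lambda>\<omega>. g w l (X2 \<omega>)) = measure \<Omega> (Bw w) - measure \<Omega> (D l \<inter> Bw w)" for w l
  proof -
    have "expectation (\<lambda>\<omega>. g w l (X2 \<omega>)) = expectation (indicator (Bw w - D l))"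
      by (rule Bochner_Integration.integral_cong) (auto simp: gX2)
    also have "\<dots> = measure \<Omega> (Bw w - D l)"
      using Bw_ev by (simp add: Int_absorb2 sets.sets_into_space Diff_subset[THEN subset_trans])
    also have "\<dots> = measure \<Omega> (Bw w) - measure \<Omega> (D l \<inter> Bw w)"
      using finite_measure_Diff'[OF Bw_ev D_ev] by (simp add: Int_commute)
    finally show ?thesis .
  qed
  have gint: "integrable \<Omega> (\<lambda>\<omega>. g w l (X2 \<omega>))" for w l
    by (rule integrable_const_bound[where B=1])
       (auto simp: g_def intro: measurable_compose[OF X2m gm[unfolded g_def]])
  define h where "h n p u q x = (\<Sum>m<M. x (Inl (n,u,m)) * x (Inr (p,m,q)))\<^sup>2"
    for n p u q and x :: "(nat\<times>nat\<times>nat) + (nat\<times>nat\<times>nat) \<Rightarrow> real"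
  have hm: "h n p u q \<in> borel_measurable S1" if "n < N" "p < P" "u < U" "q < Q" for n p u q
    unfolding h_def S1_def
    by (intro borel_measurable_power borel_measurable_sum borel_measurable_times
        measurable_component_singleton) (use that in \<open>auto simp: Ient_def\<close>)
  have hX1: "h n p u q (X1 \<omega>) = (blockprod M (\<lambda>n u m. A n u m \<omega>) (\<lambda>p m q. B p m q \<omega>) n p u q)\<^sup>2"
    if "n < N" "p < P" "u < U" "q < Q" for n p u q \<omega>
    unfolding h_def X1_def blockprod_def
    by (rule arg_cong[where f="\<lambda>x. x\<^sup>2"], rule sum.cong) (use that in \<open>auto simp: Ient_def entry_def\<close>)
  have Eh: "integrable \<Omega> (\<lambda>\<omega>. h n p u q (X1 \<omega>)) \<and> expectation (\<lambda>\<omega>. h n p u q (X1 \<omega>)) = real M * vA n * vB p"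
    if nn: "n < N" "p < P" "u < U" "q < Q" for n p u q
  proof -
    have mean: "\<And>i. i \<in> Ient \<Longrightarrow> expectation (entry i) = 0"
      using meanA meanB by (auto simp: Ient_def entry_def)
    have sq: "\<And>i. i \<in> Ient \<Longrightarrow> integrable \<Omega> (\<lambda>x. (entry i x)\<^sup>2)"
      using sqintA sqintB by (auto simp: Ient_def entry_def)
    have hh: "(\<lambda>\<omega>. h n p u q (X1 \<omega>)) = (\<lambda>x. (\<Sum>m<M. entry (Inl (n,u,m)) x * entry (Inr (p,m,q)) x)\<^sup>2)"
      using hX1[OF nn] by (simp add: blockprod_def entry_def)
    have sm': "integrable \<Omega> (\<lambda>x. (\<Sum>m<M. entry (Inl (n,u,m)) x * entry (Inr (p,m,q)) x)\<^sup>2) \<and>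
         expectation (\<lambda>x. (\<Sum>m<M. entry (Inl (n,u,m)) x * entry (Inr (p,m,q)) x)\<^sup>2)
           = (\<Sum>m<M. expectation (\<lambda>x. (entry (Inl (n,u,m)) x)\<^sup>2) * expectation (\<lambda>x. (entry (Inr (p,m,q)) x)\<^sup>2))"
      by (rule second_moment[OF indep_entries _ _ _ _ _ mean sq]) (use nn in \<open>auto simp: inj_def Ient_def\<close>)
    have "(\<Sum>m<M. expectation (\<lambda>x. (entry (Inl (n,u,m)) x)\<^sup>2) * expectation (\<lambda>x. (entry (Inr (p,m,q)) x)\<^sup>2))
        = (\<Sum>m<M. vA n * vB p)"
    proof (rule sum.cong[OF refl])
      fix m assume m: "m \<in> {..<M}"
      have "expectation (\<lambda>x. (entry (Inl (n,u,m)) x)\<^sup>2) = vA n"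
        using varA[of n u m] meanA[of n u m] nn m by (simp add: entry_def)
      moreover have "expectation (\<lambda>x. (entry (Inr (p,m,q)) x)\<^sup>2) = vB p"
        using varB[of p m q] meanB[of p m q] nn m by (simp add: entry_def)
      ultimately show "expectation (\<lambda>x. (entry (Inl (n,u,m)) x)\<^sup>2) * expectation (\<lambda>x. (entry (Inr (p,m,q)) x)\<^sup>2)
        = vA n * vB p" by simp
    qed
    then show ?thesis using sm' hh by simp
  qed
  have prodE: "integrable \<Omega> (\<lambda>\<omega>. h n p u q (X1 \<omega>) * g w l (X2 \<omega>)) \<and>
      expectation (\<lambda>\<omega>. h n p u q (X1 \<omega>) * g w l (X2 \<omega>))
        = real M * vA n * vB p * (measure \<Omega> (Bw w) - measure \<Omega> (D l \<inter> Bw w))"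
    if nn: "n < N" "p < P" "u < U" "q < Q" for n p u q w l
  proof -
    have iv': "indep_var borel (\<lambda>\<omega>. h n p u q (X1 \<omega>)) borel (\<lambda>\<omega>. g w l (X2 \<omega>))"
      by (rule indep_var_from_set[OF indep12 X1m X2m hm[OF nn] gm])
    show ?thesis
      using indep_var_lebesgue_integral[OF iv' _ gint] indep_var_integrable[OF iv' _ gint]
        Eh[OF nn] Eg by simp
  qed
  have LossE: "indicator (Bw w) \<omega> * Loss \<omega> =
      (\<Sum>n<N. \<Sum>p<P. \<Sum>u<U. \<Sum>q<Q. h n p u q (X1 \<omega>) * g w (cls n p) (X2 \<omega>))"
    if \<omega>: "\<omega> \<in> space \<Omega>" for w \<omega>
    unfolding Loss_def loss_def sum_distrib_left
    by (intro sum.cong refl) (use \<omega> in \<open>auto simp: hX1 gX2 indicator_def D_def\<close>)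
  have IntBL: "integrable \<Omega> (\<lambda>\<omega>. indicator (Bw w) \<omega> * Loss \<omega>) \<and>
      expectation (\<lambda>\<omega>. indicator (Bw w) \<omega> * Loss \<omega>) =
      (\<Sum>n<N. \<Sum>p<P. \<Sum>u<U. \<Sum>q<Q. real M * vA n * vB p *
          (measure \<Omega> (Bw w) - measure \<Omega> (D (cls n p) \<inter> Bw w)))" for w
  proof -
    have i: "integrable \<Omega> (\<lambda>\<omega>. \<Sum>n<N. \<Sum>p<P. \<Sum>u<U. \<Sum>q<Q. h n p u q (X1 \<omega>) * g w (cls n p) (X2 \<omega>))"
      by (rule integrable_sum4[where f="\<lambda>n p u q \<omega>. h n p u q (X1 \<omega>) * g w (cls n p) (X2 \<omega>)"])
         (use prodE in auto)
    have e: "expectation (\<lambda>\<omega>. \<Sum>n<N. \<Sum>p<P. \<Sum>u<U. \<Sum>q<Q. h n p u q (X1 \<omega>) * g w (cls n p) (X2 \<omega>))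
       = (\<Sum>n<N. \<Sum>p<P. \<Sum>u<U. \<Sum>q<Q. real M * vA n * vB p *
          (measure \<Omega> (Bw w) - measure \<Omega> (D (cls n p) \<inter> Bw w)))"
    proof -
      have "expectation (\<lambda>\<omega>. \<Sum>n<N. \<Sum>p<P. \<Sum>u<U. \<Sum>q<Q. h n p u q (X1 \<omega>) * g w (cls n p) (X2 \<omega>))
        = (\<Sum>n<N. \<Sum>p<P. \<Sum>u<U. \<Sum>q<Q. expectation (\<lambda>\<omega>. h n p u q (X1 \<omega>) * g w (cls n p) (X2 \<omega>)))"
        by (rule integral_sum4[where f="\<lambda>n p u q \<omega>. h n p u q (X1 \<omega>) * g w (cls n p) (X2 \<omega>)"])
           (use prodE in auto)
      also have "\<dots> = (\<Sum>n<N. \<Sum>p<P. \<Sum>u<U. \<Sum>q<Q. real M * vA n * vB p *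
          (measure \<Omega> (Bw w) - measure \<Omega> (D (cls n p) \<inter> Bw w)))"
        by (intro sum.cong refl) (use prodE in auto)
      finally show ?thesis .
    qed
    have c: "\<And>\<omega>. \<omega> \<in> space \<Omega> \<Longrightarrow> indicator (Bw w) \<omega> * Loss \<omega> =
      (\<Sum>n<N. \<Sum>p<P. \<Sum>u<U. \<Sum>q<Q. h n p u q (X1 \<omega>) * g w (cls n p) (X2 \<omega>))"
      by (rule LossE)
    have c1: "integrable \<Omega> (\<lambda>\<omega>. indicator (Bw w) \<omega> * Loss \<omega>) = integrable \<Omega>
      (\<lambda>\<omega>. \<Sum>n<N. \<Sum>p<P. \<Sum>u<U. \<Sum>q<Q. h n p u q (X1 \<omega>) * g w (cls n p) (X2 \<omega>))"
      by (rule Bochner_Integration.integrable_cong) (simp_all add: c)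
    have c2: "expectation (\<lambda>\<omega>. indicator (Bw w) \<omega> * Loss \<omega>) = expectation
      (\<lambda>\<omega>. \<Sum>n<N. \<Sum>p<P. \<Sum>u<U. \<Sum>q<Q. h n p u q (X1 \<omega>) * g w (cls n p) (X2 \<omega>))"
      by (rule Bochner_Integration.integral_cong) (simp_all add: c)
    show ?thesis using c1 c2 i e by simp
  qed
  have zeroB: "expectation (\<lambda>\<omega>. indicator (Bw w) \<omega> * Loss \<omega>) = 0" if "measure \<Omega> (Bw w) = 0" for w
  proof -
    have "measure \<Omega> (D l \<inter> Bw w) = 0" for l
      using finite_measure_mono[of "D l \<inter> Bw w" "Bw w"] Bw_ev that measure_nonneg[of \<Omega> "D l \<inter> Bw w"]
      by auto
    then show ?thesis using IntBL[of w] that by simp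
  qed
  have part2: "integral\<^sup>L \<Omega> Loss = (\<Sum>w\<le>W. PN w * cond_exp_event \<Omega> Loss (Bw w))"
  proof -
    have c: "Loss \<omega> = (\<Sum>w\<le>W. indicator (Bw w) \<omega> * Loss \<omega>)" if \<omega>: "\<omega> \<in> space \<Omega>" for \<omega>
    proof -
      have "Nrec \<omega> \<le> W"
        unfolding Nrec_def rcv_def using card_mono[of "{..<W}" "{w \<in> {..<W}. T w \<omega> < Tmax}"] by auto
      moreover have "(\<Sum>w\<le>W. indicator (Bw w) \<omega> * Loss \<omega>) = (\<Sum>w\<le>W. if w = Nrec \<omega> then Loss \<omega> else 0)"
        by (rule sum.cong) (use \<omega> in \<open>auto simp: Bw_def indicator_def\<close>)
      ultimately show ?thesis by simp
    qed
    have "integral\<^sup>L \<Omega> Loss = expectation (\<lambda>\<omega>. \<Sum>w\<le>W. indicator (Bw w) \<omega> * Loss \<omega>)"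
      by (rule Bochner_Integration.integral_cong, simp, erule c)
    also have "\<dots> = (\<Sum>w\<le>W. expectation (\<lambda>\<omega>. indicator (Bw w) \<omega> * Loss \<omega>))"
      by (rule Bochner_Integration.integral_sum) (use IntBL in blast)
    also have "\<dots> = (\<Sum>w\<le>W. PN w * cond_exp_event \<Omega> Loss (Bw w))"
    proof (rule sum.cong[OF refl])
      fix w assume w: "w \<in> {..W}"
      have mB: "measure \<Omega> (Bw w) = PN w" using part1 w by (simp add: Bw_def)
      show "expectation (\<lambda>\<omega>. indicator (Bw w) \<omega> * Loss \<omega>) = PN w * cond_exp_event \<Omega> Loss (Bw w)"
      proof (cases "PN w = 0")
        case True then show ?thesis using zeroB mB by (simp add: cond_exp_event_def)
      next
        case False then show ?thesis using mB by (simp add: cond_exp_event_def)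
      qed
    qed
    finally show ?thesis .
  qed
  have part3: "cond_exp_event \<Omega> Loss (Bw w)
      = (\<Sum>l=1..L. real (nl l) * (1 - Pd l w) * real (M * U * Q) * v1 l * v2 l)"
    if w: "w \<le> W" "PN w > 0" for w
  proof -
    have mB: "measure \<Omega> (Bw w) = PN w" using part1 w by (simp add: Bw_def)
    have Pd: "Pd l w = measure \<Omega> (D l \<inter> Bw w) / measure \<Omega> (Bw w)" for l
      by (simp add: Pd_def cond_prob_def D_def Bw_def Nrec_def)
    define f where "f l = real (M * U * Q) * v1 l * v2 l * (1 - Pd l w)" for l
    have "cond_exp_event \<Omega> Loss (Bw w) = (\<Sum>n<N. \<Sum>p<P. \<Sum>u<U. \<Sum>q<Q. real M * vA n * vB p *
          (measure \<Omega> (Bw w) - measure \<Omega> (D (cls n p) \<inter> Bw w))) / measure \<Omega> (Bw w)"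
      using IntBL[of w] by (simp add: cond_exp_event_def)
    also have "\<dots> = (\<Sum>n<N. \<Sum>p<P. measure \<Omega> (Bw w) * f (cls n p)) / measure \<Omega> (Bw w)"
    proof (intro arg_cong2[where f="(/)"] sum.cong refl)
      fix n p assume np: "n \<in> {..<N}" "p \<in> {..<P}"
      have "(\<Sum>u<U. \<Sum>q<Q. real M * vA n * vB p * (measure \<Omega> (Bw w) - measure \<Omega> (D (cls n p) \<inter> Bw w)))
          = real U * real Q * real M * vA n * vB p * (measure \<Omega> (Bw w) - measure \<Omega> (D (cls n p) \<inter> Bw w))"
        by simp
      also have "\<dots> = measure \<Omega> (Bw w) * f (cls n p)"
        using cls_varA[of n p] cls_varB[of n p] np mB w
        by (simp add: f_def Pd field_simps)
      finally show "(\<Sum>u<U. \<Sum>q<Q. real M * vA n * vB p * (measure \<Omega> (Bw w) - measure \<Omega> (D (cls n p) \<inter> Bw w)))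
          = measure \<Omega> (Bw w) * f (cls n p)" .
    qed
    also have "\<dots> = (\<Sum>n<N. \<Sum>p<P. f (cls n p))"
      using mB w by (simp add: sum_distrib_left[symmetric])
    also have "\<dots> = (\<Sum>l=1..L. real (nl l) * f l)"
      unfolding nl_def by (rule group_cls) (rule cls_range)
    also have "\<dots> = (\<Sum>l=1..L. real (nl l) * (1 - Pd l w) * real (M * U * Q) * v1 l * v2 l)"
      by (simp add: f_def mult_ac)
    finally show ?thesis .
  qed
  show ?thesis
    using part1 part2 part3 unfolding Bw_def by blast
qed

end
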